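(* Let $n\ge 2$ and let $E\subset\mathbb{R}^n$ be a set of type $F_\sigma$ with $|E|=t$, $0<t<\infty$. Then there exist sets $E_0\supset E_1\supset\dots\supset E_n$ of type $F_\sigma$, with $E_0=E$ and $|E_j|=2^{-j}t$ for $j=0,\dots,n$, such that for every $j=1,\dots,n$ and every $F_\sigma$-set $A\subset E_{j-1}$ with $|A|\ge 2^{-j}t$, $$\operatorname{mes}_{n-1}\Pi_j(E_j)\le\operatorname{mes}_{n-1}\Pi_j(A).$$
   Context: $|\cdot|$ is $n$-dimensional Lebesgue measure. For $k=1,\dots,n$, $\Pi_k(E)$ denotes the orthogonal projection of $E$ onto the coordinate hyperplane $\{x_k=0\}$ (identified with $\mathbb{R}^{n-1}$), and $\operatorname{mes}_{n-1}$ is $(n-1)$-dimensional Lebesgue measure. *)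

theory Defs
  imports "HOL-Analysis.Analysis" "HOL-Probability.Probability"
begin

text \<open>Points of R^n are functions on the coordinate set {1..n} (extensional, i.e. elements of
  PiE {1..n} (\<lambda>_. UNIV)); R^n carries the product topology and the product Lebesgue(-Borel)
  measure.\<close>

definition Rn_top :: "nat \<Rightarrow> (nat \<Rightarrow> real) topology" where
  "Rn_top n = product_topology (\<lambda>_. euclideanreal) {1..n}"

definition Rn_meas :: "nat \<Rightarrow> (nat \<Rightarrow> real) measure" where
  "Rn_meas n = completion (Pi\<^sub>M {1..n} (\<lambda>_. lborel))"

definition Fsigma_Rn :: "nat \<Rightarrow> (nat \<Rightarrow> real) set \<Rightarrow> bool" where
  "Fsigma_Rn n E \<longleftrightarrow> fsigma_in (Rn_top n) E"

text \<open>Orthogonal projection onto the coordinate hyperplane {x_k = 0}, identified with R^(n-1)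
  (functions on the coordinate set {1..n} - {k}).\<close>
definition proj_k :: "nat \<Rightarrow> nat \<Rightarrow> (nat \<Rightarrow> real) set \<Rightarrow> (nat \<Rightarrow> real) set" where
  "proj_k n k E = (\<lambda>x. restrict x ({1..n} - {k})) ` E"

definition mes_hyp :: "nat \<Rightarrow> nat \<Rightarrow> (nat \<Rightarrow> real) set \<Rightarrow> ennreal" where
  "mes_hyp n k S = emeasure (completion (Pi\<^sub>M ({1..n} - {k}) (\<lambda>_. lborel))) S"

end

theory Submission
  imports Defs
begin

abbreviation PT :: "nat set \<Rightarrow> (nat \<Rightarrow> real) topology" where
  "PT I \<equiv> product_topology (\<lambda>_. euclideanreal) I"

abbreviation LM :: "nat set \<Rightarrow> (nat \<Rightarrow> real) measure" where
  "LM I \<equiv> Pi\<^sub>M I (\<lambda>_. lborel)"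

lemma cont_restrict_UNIV: "continuous_map euclidean (PT I) (\<lambda>x. restrict x I)"
  by (auto simp: continuous_map_componentwise euclidean_product_topology[symmetric]
      intro: continuous_map_product_projection)

lemma cont_restrict: "J \<subseteq> I \<Longrightarrow> continuous_map (PT I) (PT J) (\<lambda>x. restrict x J)"
  by (auto simp: continuous_map_componentwise intro: continuous_map_product_projection)

lemma id_meas: "(\<lambda>x. x) \<in> measurable (LM I) (borel :: (nat \<Rightarrow> real) measure)"
proof (rule measurable_coordinatewise_then_product)
  fix i
  show "(\<lambda>x. x i) \<in> borel_measurable (LM I)"
  proof (cases "i \<in> I")
    case True then show ?thesis by measurable
  next
    case False
    have "(\<lambda>x. undefined) \<in> borel_measurable (LM I)" by simp
    then show ?thesis
      by (rule measurable_cong[THEN iffD1, rotated]) (use False in \<open>auto simp: space_PiM PiE_def extensional_def\<close>)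
  qed
qed

lemma restrict_meas: "(\<lambda>x. restrict x I) \<in> measurable (borel :: (nat \<Rightarrow> real) measure) (LM I)"
proof -
  have "sets (Pi\<^sub>M UNIV (\<lambda>_::nat. lborel)) = sets (Pi\<^sub>M UNIV (\<lambda>_::nat. (borel :: real measure)))"
    by (rule sets_PiM_cong) auto
  also have "\<dots> = sets borel" by (rule sets_PiM_equal_borel)
  finally have e: "sets (Pi\<^sub>M UNIV (\<lambda>_::nat. lborel)) = sets (borel :: (nat \<Rightarrow> real) measure)" .
  have "(\<lambda>x. restrict x I) \<in> measurable (Pi\<^sub>M UNIV (\<lambda>_::nat. lborel)) (LM I)"
    by (rule measurable_restrict_subset) auto
  then show ?thesis using e measurable_cong_sets by blast
qed

lemma closed_PiE_UNIV: "closed (PiE I (\<lambda>_. UNIV) :: (nat \<Rightarrow> real) set)"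
proof -
  have "PiE I (\<lambda>_. UNIV) = (\<Inter>i\<in>-I. {x::nat\<Rightarrow>real. x i = undefined})"
    by (auto simp: PiE_def extensional_def)
  moreover have "closed {x::nat\<Rightarrow>real. x i = undefined}" for i
    by (intro closed_Collect_eq continuous_on_product_coordinates continuous_on_const)
  ultimately show ?thesis by auto
qed

lemma sets_LM_borel: "X \<in> sets (LM I) \<Longrightarrow> X \<in> sets (borel :: (nat \<Rightarrow> real) measure)"
proof -
  assume X: "X \<in> sets (LM I)"
  have "(\<lambda>x. restrict x I) -` X \<inter> space borel \<in> sets borel"
    using measurable_sets[OF restrict_meas X] .
  moreover have "PiE I (\<lambda>_. UNIV) \<in> sets (borel :: (nat \<Rightarrow> real) measure)"
    using closed_PiE_UNIV by auto
  moreover have "X = ((\<lambda>x. restrict x I) -` X \<inter> space borel) \<inter> PiE I (\<lambda>_. UNIV)"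
    using sets.sets_into_space[OF X] by (auto simp: space_PiM PiE_restrict)
  ultimately show ?thesis by (metis sets.Int)
qed

lemma borel_sets_LM: "X \<in> sets (borel :: (nat \<Rightarrow> real) measure) \<Longrightarrow> X \<subseteq> PiE I (\<lambda>_. UNIV) \<Longrightarrow> X \<in> sets (LM I)"
proof -
  assume X: "X \<in> sets borel" "X \<subseteq> PiE I (\<lambda>_. UNIV)"
  have "(\<lambda>x. x) -` X \<inter> space (LM I) \<in> sets (LM I)"
    using measurable_sets[OF id_meas X(1)] .
  moreover have "(\<lambda>x. x) -` X \<inter> space (LM I) = X" using X(2) by (auto simp: space_PiM)
  ultimately show ?thesis by simp
qed

lemma closedin_closed: "closedin (PT I) C \<Longrightarrow> closed C"
proof -
  assume C: "closedin (PT I) C"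
  have "closedin euclidean {x \<in> topspace euclidean. restrict x I \<in> C}"
    using closedin_continuous_map_preimage[OF cont_restrict_UNIV C] .
  then have "closed {x. restrict x I \<in> C}" by simp
  moreover have "C = {x. restrict x I \<in> C} \<inter> PiE I (\<lambda>_. UNIV)"
  proof -
    have sub: "C \<subseteq> PiE I (\<lambda>_. UNIV)" using closedin_subset[OF C] by (simp add: topspace_product_topology)
    show ?thesis
    proof
      show "C \<subseteq> {x. restrict x I \<in> C} \<inter> PiE I (\<lambda>_. UNIV)"
        using sub by (auto simp: PiE_restrict simp del: PiE_UNIV_domain)
      show "{x. restrict x I \<in> C} \<inter> PiE I (\<lambda>_. UNIV) \<subseteq> C"
        by (auto simp: PiE_restrict simp del: PiE_UNIV_domain)
    qed
  qed
  ultimately show ?thesis using closed_PiE_UNIV by (metis closed_Int)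
qed

lemma closedin_sets: "closedin (PT I) C \<Longrightarrow> C \<in> sets (LM I)"
proof -
  assume C: "closedin (PT I) C"
  have sub: "C \<subseteq> PiE I (\<lambda>_. UNIV)" using closedin_subset[OF C] by (simp add: topspace_product_topology)
  show ?thesis using closedin_closed[OF C] sub by (intro borel_sets_LM) auto
qed

lemma fsigma_sets: "fsigma_in (PT I) C \<Longrightarrow> C \<in> sets (LM I)"
proof -
  assume "fsigma_in (PT I) C"
  then obtain U where U: "countable U" "\<And>c. c \<in> U \<Longrightarrow> closedin (PT I) c" "C = \<Union>U"
    unfolding fsigma_in_def union_of_def by auto
  show ?thesis unfolding U(3) using U(1,2) by (intro sets.countable_Union) (auto intro: closedin_sets)
qed

lemma compact_closedin: "compact K \<Longrightarrow> K \<subseteq> PiE I (\<lambda>_. UNIV) \<Longrightarrow> closedin (PT I) K"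
proof -
  assume K: "compact K" "K \<subseteq> PiE I (\<lambda>_. UNIV)"
  have "compactin (PT I) ((\<lambda>x. restrict x I) ` K)"
    by (rule image_compactin[OF _ cont_restrict_UNIV]) (use K in simp)
  moreover have "(\<lambda>x. restrict x I) ` K = K"
    using K(2) by (force simp: PiE_restrict image_iff)
  ultimately have "compactin (PT I) K" by simp
  then show ?thesis
    by (rule compactin_imp_closedin[rotated]) (simp add: Hausdorff_space_product_topology)
qed

lemma proj_closed_fsigma:
  assumes C: "closedin (PT I) C" and J: "J \<subseteq> I" and fin: "finite I"
  shows "fsigma_in (PT J) ((\<lambda>x. restrict x J) ` C)"
proof -
  define K where "K m = C \<inter> PiE I (\<lambda>_. {-real m..real m})" for m :: nat
  have "compactin (PT I) (K m)" for m
    unfolding K_def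
    by (intro closed_Int_compactin C) (simp add: compactin_PiE)
  then have "compactin (PT J) ((\<lambda>x. restrict x J) ` K m)" for m
    by (rule image_compactin[OF _ cont_restrict[OF J]])
  then have cl: "closedin (PT J) ((\<lambda>x. restrict x J) ` K m)" for m
    by (rule compactin_imp_closedin[rotated]) (simp add: Hausdorff_space_product_topology)
  have "C = (\<Union>m. K m)"
  proof
    show "C \<subseteq> (\<Union>m. K m)"
    proof
      fix x assume x: "x \<in> C"
      then have xI: "x \<in> PiE I (\<lambda>_. UNIV)" using closedin_subset[OF C] by auto
      obtain m :: nat where m: "Max (insert 0 ((\<lambda>i. \<bar>x i\<bar>) ` I)) \<le> m" using real_arch_simple by blast
      have "\<bar>x i\<bar> \<le> m" if "i \<in> I" for i
        using m that fin by (meson Max_ge finite_imageI finite_insert image_eqI insertCI order_trans)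
      then have "x \<in> K m" using x xI by (force simp: K_def PiE_def abs_le_iff)
      then show "x \<in> (\<Union>m. K m)" by blast
    qed
  qed (auto simp: K_def)
  then have "(\<lambda>x. restrict x J) ` C = (\<Union>m. (\<lambda>x. restrict x J) ` K m)" by auto
  moreover have "fsigma_in (PT J) (\<Union>m. (\<lambda>x. restrict x J) ` K m)"
    by (rule fsigma_in_Union) (auto intro: closed_imp_fsigma_in cl)
  ultimately show ?thesis by simp
qed

lemma inner_approx:
  assumes S: "S \<in> sets (LM I)" and fin: "emeasure (LM I) S < \<infinity>" and e: "e > 0"
  shows "\<exists>K. compact K \<and> K \<subseteq> S \<and> measure (LM I) S \<le> measure (LM I) K + e"
proof -
  define M' where "M' = distr (density (LM I) (indicator S)) (borel :: (nat\<Rightarrow>real) measure) (\<lambda>x. x)"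
  have idm: "(\<lambda>x. x) \<in> measurable (density (LM I) (indicator S)) (borel :: (nat\<Rightarrow>real) measure)"
    using id_meas by (subst measurable_cong_sets[OF sets_density refl]) simp
  have sM: "sets M' = sets borel" by (simp add: M'_def)
  have eM: "emeasure M' X = emeasure (LM I) (S \<inter> X)" if X: "X \<in> sets borel" for X
  proof -
    have X': "X \<inter> space (LM I) \<in> sets (LM I)"
      using measurable_sets[OF id_meas X] by (simp add: Int_commute)
    have "emeasure M' X = emeasure (density (LM I) (indicator S)) (X \<inter> space (LM I))"
      unfolding M'_def using X idm by (simp add: emeasure_distr Int_commute)
    also have "\<dots> = emeasure (LM I) (S \<inter> (X \<inter> space (LM I)))"
      by (rule emeasure_restricted[OF S X'])
    also have "S \<inter> (X \<inter> space (LM I)) = S \<inter> X" using sets.sets_into_space[OF S] by auto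
    finally show ?thesis .
  qed
  have spM: "space M' = UNIV" by (simp add: M'_def)
  have "emeasure M' (space M') = emeasure (LM I) S"
    using eM[of UNIV] spM by simp
  then have finM: "emeasure M' (space M') \<noteq> \<infinity>" using fin by simp
  have Sb: "S \<in> sets borel" using sets_LM_borel[OF S] .
  have reg: "emeasure M' S = (SUP K \<in> {K. K \<subseteq> S \<and> compact K}. emeasure M' K)"
    by (rule inner_regular[OF sM finM Sb])
  have Km: "emeasure M' K = emeasure (LM I) K" if "K \<subseteq> S" "compact K" for K
    using eM[of K] that by (simp add: borel_compact Int_absorb1)
  have eS: "emeasure (LM I) S = ennreal (measure (LM I) S)"
    using fin by (simp add: emeasure_eq_ennreal_measure)
  show ?thesis
  proof (cases "measure (LM I) S \<le> e")
    case True
    then show ?thesis by (intro exI[of _ "{}"]) auto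
  next
    case False
    then have "ennreal (measure (LM I) S - e) < emeasure M' S"
      using eM[OF Sb] eS e by (simp add: ennreal_less_iff)
    then obtain K where K: "K \<subseteq> S" "compact K" "ennreal (measure (LM I) S - e) < emeasure M' K"
      unfolding reg less_SUP_iff by auto
    have KS: "K \<in> sets (LM I)"
      by (rule borel_sets_LM) (use K sets.sets_into_space[OF S] in \<open>auto simp: borel_compact space_PiM\<close>)
    have "emeasure (LM I) K \<le> emeasure (LM I) S" using K(1) S by (rule emeasure_mono)
    then have "emeasure (LM I) K = ennreal (measure (LM I) K)"
      using fin by (intro emeasure_eq_ennreal_measure) (auto simp: top_unique)
    then have "measure (LM I) S - e < measure (LM I) K"
      using K(3) Km[OF K(1,2)] False by (simp add: ennreal_less_iff)
    then show ?thesis using K by (intro exI[of _ K]) auto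
  qed
qed

lemma inner_fsigma:
  assumes S: "S \<in> sets (LM I)" and fin: "emeasure (LM I) S < \<infinity>"
  shows "\<exists>S'. fsigma_in (PT I) S' \<and> S' \<subseteq> S \<and> S' \<in> sets (LM I) \<and> emeasure (LM I) (S - S') = 0"
proof -
  have "\<forall>m::nat. \<exists>K. compact K \<and> K \<subseteq> S \<and> measure (LM I) S \<le> measure (LM I) K + 1 / Suc m"
    using inner_approx[OF S fin] by simp
  then obtain K where K: "\<And>m. compact (K m)" "\<And>m. K m \<subseteq> S" "\<And>m. measure (LM I) S \<le> measure (LM I) (K m) + 1 / Suc m"
    by metis
  have sub: "S \<subseteq> PiE I (\<lambda>_. UNIV)" using sets.sets_into_space[OF S] by (simp add: space_PiM)
  have cl: "closedin (PT I) (K m)" for m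
    using K(2)[of m] sub by (intro compact_closedin K(1)) blast
  define S' where "S' = (\<Union>m. K m)"
  have fs: "fsigma_in (PT I) S'"
    unfolding S'_def by (rule fsigma_in_Union) (auto intro: closed_imp_fsigma_in cl)
  have S'S: "S' \<subseteq> S" using K(2) by (auto simp: S'_def)
  have S'm: "S' \<in> sets (LM I)" using fsigma_sets[OF fs] .
  have finS': "emeasure (LM I) S' < \<infinity>" using emeasure_mono[OF S'S S] fin by auto
  have Km: "K m \<in> sets (LM I)" for m using closedin_sets[OF cl] .
  have "measure (LM I) S \<le> measure (LM I) S'"
  proof (rule field_le_epsilon)
    fix e :: real assume "e > 0"
    then obtain m :: nat where m: "1 / Suc m < e"
      by (metis nat_approx_posE of_nat_Suc)
    have "measure (LM I) (K m) \<le> measure (LM I) S'"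
      by (rule measure_mono_fmeasurable) (use S'm finS' Km in \<open>auto simp: fmeasurable_def S'_def\<close>)
    then show "measure (LM I) S \<le> measure (LM I) S' + e" using K(3)[of m] m by linarith
  qed
  moreover have "measure (LM I) S' \<le> measure (LM I) S"
    by (rule measure_mono_fmeasurable) (use S'S S'm S fin in \<open>auto simp: fmeasurable_def\<close>)
  ultimately have eq: "measure (LM I) S' = measure (LM I) S" by simp
  have "emeasure (LM I) (S - S') = emeasure (LM I) S - emeasure (LM I) S'"
    using S'S S'm finS' S by (intro emeasure_Diff) auto
  also have "\<dots> = 0"
    using eq fin finS' by (simp add: emeasure_eq_ennreal_measure)
  finally show ?thesis using fs S'S S'm by blast
qed

lemma sup_split:
  fixes N :: "'a measure" and S :: "real \<Rightarrow> 'a set" and c :: ennreal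
  assumes Sm: "\<And>p. S p \<in> sets N" and fin: "\<And>p. emeasure N (S p) \<noteq> \<infinity>"
    and mono: "\<And>p q. p \<le> q \<Longrightarrow> S q \<subseteq> S p"
    and a: "c \<le> emeasure N (S a)" and b: "emeasure N (S b) < c"
  shows "\<exists>p\<ge>a. emeasure N (\<Union>m. S (p + 1/Suc m)) \<le> c \<and> c \<le> emeasure N (\<Inter>m. S (p - 1/Suc m))"
proof -
  define T where "T = {p. c \<le> emeasure N (S p)}"
  have aT: "a \<in> T" using a by (simp add: T_def)
  have Tb: "p < b" if "p \<in> T" for p
  proof (rule ccontr)
    assume "\<not> p < b"
    then have "emeasure N (S p) \<le> emeasure N (S b)" using mono[of b p] Sm by (intro emeasure_mono) auto
    then show False using that b by (simp add: T_def)
  qed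
  have bdd: "bdd_above T" using Tb by (intro bdd_aboveI[of _ b]) (auto intro: less_imp_le)
  define p0 where "p0 = Sup T"
  have ap: "a \<le> p0" unfolding p0_def using aT bdd by (rule cSup_upper)
  have up: "emeasure N (S (p0 + 1/Suc m)) < c" for m :: nat
  proof -
    have "p0 + 1/Suc m \<notin> T"
    proof
      assume "p0 + 1/Suc m \<in> T"
      then have "p0 + 1/Suc m \<le> p0" unfolding p0_def using bdd by (rule cSup_upper)
      then show False by (simp add: field_simps)
    qed
    then show ?thesis by (simp add: T_def not_le)
  qed
  have lo: "c \<le> emeasure N (S (p0 - 1/Suc m))" for m :: nat
  proof -
    have "p0 - 1/Suc m < Sup T" by (simp add: p0_def[symmetric])
    then obtain p where p: "p \<in> T" "p0 - 1/Suc m < p"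
      using aT bdd by (subst (asm) less_cSup_iff) auto
    have "emeasure N (S p) \<le> emeasure N (S (p0 - 1/Suc m))"
      using mono[of "p0 - 1/Suc m" p] p(2) Sm by (intro emeasure_mono) auto
    then show ?thesis using p(1) by (simp add: T_def)
  qed
  have inc: "incseq (\<lambda>m::nat. S (p0 + 1/Suc m))"
    by (intro monoI mono) (simp add: frac_le)
  have dec: "decseq (\<lambda>m::nat. S (p0 - 1/Suc m))"
    by (intro antimonoI mono) (simp add: frac_le)
  have "emeasure N (\<Union>m. S (p0 + 1/Suc m)) = (SUP m. emeasure N (S (p0 + 1/Suc m)))"
    using inc Sm by (intro SUP_emeasure_incseq[symmetric]) auto
  also have "\<dots> \<le> c" using up by (intro SUP_least less_imp_le)
  finally have 1: "emeasure N (\<Union>m. S (p0 + 1/Suc m)) \<le> c" .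
  have "emeasure N (\<Inter>m. S (p0 - 1/Suc m)) = (INF m. emeasure N (S (p0 - 1/Suc m)))"
    using dec Sm fin by (intro INF_emeasure_decseq[symmetric]) auto
  also have "c \<le> \<dots>" using lo by (intro INF_greatest)
  finally have 2: "c \<le> emeasure N (\<Inter>m. S (p0 - 1/Suc m))" .
  show ?thesis using ap 1 2 by blast
qed

lemma bathtub:
  fixes M :: "'a measure" and f :: "'a \<Rightarrow> ennreal" and l :: real
  assumes f: "f \<in> borel_measurable M" and S: "S \<in> sets M" and P: "P \<in> sets M" and l: "l > 0"
    and geS: "\<And>y. y \<in> S \<Longrightarrow> ennreal l \<le> f y"
    and leS: "\<And>y. y \<in> space M \<Longrightarrow> y \<notin> S \<Longrightarrow> f y \<le> ennreal l"
    and int: "(\<integral>\<^sup>+y. f y * indicator S y \<partial>M) \<le> (\<integral>\<^sup>+y. f y * indicator P y \<partial>M)"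
    and finS: "(\<integral>\<^sup>+y. f y * indicator S y \<partial>M) < \<infinity>"
  shows "emeasure M S \<le> emeasure M P"
proof -
  define a where "a = (\<integral>\<^sup>+y. f y * indicator (S \<inter> P) y \<partial>M)"
  define b where "b = (\<integral>\<^sup>+y. f y * indicator (S - P) y \<partial>M)"
  define c where "c = (\<integral>\<^sup>+y. f y * indicator (P - S) y \<partial>M)"
  have eS: "(\<integral>\<^sup>+y. f y * indicator S y \<partial>M) = a + b"
    unfolding a_def b_def using S P f
    by (subst nn_integral_add[symmetric]) (auto intro!: nn_integral_cong simp: indicator_def)
  have eP: "(\<integral>\<^sup>+y. f y * indicator P y \<partial>M) = a + c"
    unfolding a_def c_def using S P f
    by (subst nn_integral_add[symmetric]) (auto intro!: nn_integral_cong simp: indicator_def)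
  have ainf: "a \<noteq> \<infinity>" using finS eS by (auto simp: top_unique)
  have bc: "b \<le> c" using int eS eP ainf by (simp add: ennreal_add_left_cancel_le)
  have "ennreal l * emeasure M (S - P) = (\<integral>\<^sup>+y. ennreal l * indicator (S - P) y \<partial>M)"
    using S P by (simp add: nn_integral_cmult_indicator)
  also have "\<dots> \<le> b" unfolding b_def
    by (intro nn_integral_mono) (auto simp: indicator_def geS)
  also have "\<dots> \<le> c" by (rule bc)
  also have "c \<le> (\<integral>\<^sup>+y. ennreal l * indicator (P - S) y \<partial>M)" unfolding c_def
    using sets.sets_into_space[OF P] by (intro nn_integral_mono) (auto simp: indicator_def intro!: leS)
  also have "\<dots> = ennreal l * emeasure M (P - S)"
    using S P by (simp add: nn_integral_cmult_indicator)
  finally have "emeasure M (S - P) \<le> emeasure M (P - S)"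
    using l by (subst (asm) ennreal_mult_le_mult_iff) auto
  then have "emeasure M (S \<inter> P) + emeasure M (S - P) \<le> emeasure M (S \<inter> P) + emeasure M (P - S)"
    by (rule add_left_mono)
  also have "emeasure M (S \<inter> P) + emeasure M (S - P) = emeasure M S"
    using S P by (subst plus_emeasure) (auto intro: arg_cong[where f="emeasure M"])
  also have "emeasure M (S \<inter> P) + emeasure M (P - S) = emeasure M P"
    using S P by (subst plus_emeasure) (auto intro: arg_cong[where f="emeasure M"])
  finally show ?thesis .
qed

lemma ennreal_E1:
  fixes x :: ennreal assumes l: "l \<ge> 0"
  shows "(\<exists>m::nat. ennreal (l + 1/Suc m) < x) \<longleftrightarrow> ennreal l < x"
proof
  assume "\<exists>m::nat. ennreal (l + 1/Suc m) < x"
  then obtain m::nat where "ennreal (l + 1/Suc m) < x" by blast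
  moreover have "ennreal l \<le> ennreal (l + 1/Suc m)" by (intro ennreal_leI) auto
  ultimately show "ennreal l < x" by simp
next
  assume lx: "ennreal l < x"
  show "\<exists>m::nat. ennreal (l + 1/Suc m) < x"
  proof (cases x)
    case (real v)
    then have v: "l < v" "v \<ge> 0" using lx l by (auto simp: ennreal_less_iff)
    then obtain m :: nat where m: "1 / Suc m < v - l"
      by (metis diff_gt_0_iff_gt nat_approx_posE of_nat_Suc)
    then have "ennreal (l + 1/Suc m) < ennreal v" using l v by (subst ennreal_less_iff) auto
    then show ?thesis using real by blast
  next
    case top then show ?thesis by auto
  qed
qed

lemma ennreal_E2:
  fixes x :: ennreal assumes l: "l > 0"
  shows "(\<forall>m::nat. ennreal (l - 1/Suc m) < x) \<longleftrightarrow> ennreal l \<le> x"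
proof
  assume lx: "ennreal l \<le> x"
  show "\<forall>m::nat. ennreal (l - 1/Suc m) < x"
  proof
    fix m :: nat
    have "ennreal (l - 1/Suc m) < ennreal l"
      using l by (intro ennreal_lessI) auto
    then show "ennreal (l - 1/Suc m) < x" using lx by simp
  qed
next
  assume H: "\<forall>m::nat. ennreal (l - 1/Suc m) < x"
  show "ennreal l \<le> x"
  proof (cases x)
    case (real v)
    have "l \<le> v"
    proof (rule field_le_epsilon)
      fix e :: real assume "e > 0"
      then obtain m :: nat where m: "1 / Suc m < e"
        by (metis nat_approx_posE of_nat_Suc)
      have "l - 1/Suc m < v"
      proof (cases "l - 1/Suc m < 0")
        case True then show ?thesis using real by linarith
      next
        case False then show ?thesis using H[rule_format, of m] real by (simp add: ennreal_less_iff)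
      qed
      then show "l \<le> v + e" using m by linarith
    qed
    then show ?thesis using real by (simp add: ennreal_leI)
  next
    case top then show ?thesis by auto
  qed
qed

lemma level_set:
  fixes M :: "'a measure" and f :: "'a \<Rightarrow> ennreal" and g :: "'a \<Rightarrow> real" and s :: real
  assumes f[measurable]: "f \<in> borel_measurable M" and g[measurable]: "g \<in> borel_measurable M"
    and tot: "(\<integral>\<^sup>+y. f y \<partial>M) = ennreal (2 * s)" and s: "s > 0"
    and gnull: "\<And>r. emeasure M {y \<in> space M. g y = r} = 0"
  shows "\<exists>l S. l > 0 \<and> S \<in> sets M \<and> (\<forall>y\<in>S. ennreal l \<le> f y) \<and>
     (\<forall>y\<in>space M. y \<notin> S \<longrightarrow> f y \<le> ennreal l) \<and> (\<integral>\<^sup>+y. f y * indicator S y \<partial>M) = ennreal s"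
proof -
  define N where "N = density M f"
  have sN: "sets N = sets M" by (simp add: N_def)
  have eN: "emeasure N X = (\<integral>\<^sup>+y. f y * indicator X y \<partial>M)" if "X \<in> sets M" for X
    unfolding N_def using that by (simp add: emeasure_density)
  have eNsp: "emeasure N (space M) = ennreal (2 * s)"
  proof -
    have "(\<integral>\<^sup>+y. f y * indicator (space M) y \<partial>M) = (\<integral>\<^sup>+y. f y \<partial>M)"
      by (intro nn_integral_cong) (simp add: indicator_def)
    then show ?thesis using eN[of "space M"] tot by simp
  qed
  have finN: "emeasure N X \<noteq> \<infinity>" if "X \<in> sets M" for X
  proof -
    have "emeasure N X \<le> emeasure N (space M)"
      using that sN by (intro emeasure_mono) (auto dest: sets.sets_into_space)
    then show ?thesis using eNsp by (auto simp: top_unique)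
  qed
  have nullN: "emeasure N X = 0" if "X \<in> sets M" "emeasure M X = 0" for X
    using eN[OF that(1)] that by (simp add: nn_integral_null_set null_setsI)
  define S1 where "S1 p = {y \<in> space M. ennreal p < f y}" for p :: real
  have S1m: "S1 p \<in> sets N" for p unfolding S1_def sN by measurable
  have S1mono: "S1 q \<subseteq> S1 p" if "p \<le> q" for p q
    using that by (auto simp: S1_def intro: le_less_trans[OF ennreal_leI])
  have U0: "(\<Union>m::nat. S1 (1/Suc m)) = S1 0"
  proof -
    have "(\<exists>m::nat. ennreal (1/Suc m) < x) \<longleftrightarrow> 0 < x" for x
      using ennreal_E1[of 0 x] by (simp only: add_0_left ennreal_0 order.refl simp_thms)
    then show ?thesis unfolding S1_def by auto
  qed
  have e0: "emeasure N (S1 0) = ennreal (2 * s)"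
  proof -
    have "emeasure N (S1 0) = (\<integral>\<^sup>+y. f y * indicator (S1 0) y \<partial>M)"
      using S1m[of 0] unfolding sN by (rule eN)
    also have "\<dots> = (\<integral>\<^sup>+y. f y \<partial>M)"
      by (intro nn_integral_cong) (auto simp: S1_def indicator_def)
    finally show ?thesis using tot by simp
  qed
  have inc0: "incseq (\<lambda>m::nat. S1 (1/Suc m))"
    by (intro monoI S1mono) (simp add: frac_le)
  have "(SUP m::nat. emeasure N (S1 (1/Suc m))) = emeasure N (\<Union>m::nat. S1 (1/Suc m))"
    using S1m inc0 by (intro SUP_emeasure_incseq) auto
  also have "\<dots> = ennreal (2 * s)" using U0 e0 by simp
  finally have "ennreal s < (SUP m::nat. emeasure N (S1 (1/Suc m)))"
    using s by (simp add: ennreal_less_iff)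
  then obtain ma :: nat where ma: "ennreal s < emeasure N (S1 (1/Suc ma))"
    by (auto simp: less_SUP_iff)
  have "(\<Inter>m::nat. S1 (real m)) = {y \<in> space M. f y = \<infinity>}"
  proof -
    have "(\<forall>m::nat. ennreal (real m) < x) \<longleftrightarrow> x = \<infinity>" for x :: ennreal
    proof
      assume H: "\<forall>m::nat. ennreal (real m) < x"
      show "x = \<infinity>"
      proof (rule ccontr)
        assume "x \<noteq> \<infinity>"
        then obtain n :: nat where "x < of_nat n" using ennreal_Ex_less_of_nat[of x] by (auto simp: top.not_eq_extremum)
        then show False using H[rule_format, of n] by (simp add: ennreal_of_nat_eq_real_of_nat)
      qed
    qed (simp add: ennreal_less_top)
    then show ?thesis unfolding S1_def by auto
  qed
  moreover have "emeasure M {y \<in> space M. f y = \<infinity>} = 0"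
  proof -
    have "emeasure M (f -` {\<infinity>} \<inter> space M) = 0" using tot by (intro nn_integral_PInf) auto
    moreover have "f -` {\<infinity>} \<inter> space M = {y \<in> space M. f y = \<infinity>}" by auto
    ultimately show ?thesis by simp
  qed
  ultimately have "emeasure N (\<Inter>m::nat. S1 (real m)) = 0"
    by (intro nullN) auto
  moreover have "(INF m::nat. emeasure N (S1 (real m))) = emeasure N (\<Inter>m::nat. S1 (real m))"
    using S1m finN sN by (intro INF_emeasure_decseq) (auto intro!: antimonoI S1mono)
  ultimately have "(INF m::nat. emeasure N (S1 (real m))) < ennreal s" using s by simp
  then obtain mb :: nat where mb: "emeasure N (S1 (real mb)) < ennreal s"
    by (auto simp: INF_less_iff)
  have finS1: "emeasure N (S1 p) \<noteq> \<infinity>" for p using finN S1m sN by auto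
  obtain l where l: "l \<ge> 1/Suc ma" "emeasure N (\<Union>m. S1 (l + 1/Suc m)) \<le> ennreal s"
      "ennreal s \<le> emeasure N (\<Inter>m. S1 (l - 1/Suc m))"
    using sup_split[of S1 N "ennreal s" "1/Suc ma" "real mb", OF S1m finS1 S1mono
        less_imp_le[OF ma] mb] by blast
  have lpos: "l > 0"
  proof -
    have "0 < 1 / real (Suc ma)" by simp
    then show ?thesis using l(1) by linarith
  qed
  define G where "G = {y \<in> space M. ennreal l < f y}"
  define Ge where "Ge = {y \<in> space M. ennreal l \<le> f y}"
  have G1: "(\<Union>m. S1 (l + 1/Suc m)) = G"
    using ennreal_E1[OF less_imp_le[OF lpos]] unfolding S1_def G_def by auto
  have G2: "(\<Inter>m. S1 (l - 1/Suc m)) = Ge"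
    using ennreal_E2[OF lpos] unfolding S1_def Ge_def by auto
  have Gm: "G \<in> sets M" "Ge \<in> sets M" unfolding G_def Ge_def by measurable
  have GGe: "G \<subseteq> Ge" by (auto simp: G_def Ge_def)
  have nG: "emeasure N G \<le> ennreal s" using l(2) G1 by simp
  have nGe: "ennreal s \<le> emeasure N Ge" using l(3) G2 by simp
  have good: "\<exists>l S. l > 0 \<and> S \<in> sets M \<and> (\<forall>y\<in>S. ennreal l \<le> f y) \<and>
     (\<forall>y\<in>space M. y \<notin> S \<longrightarrow> f y \<le> ennreal l) \<and> (\<integral>\<^sup>+y. f y * indicator S y \<partial>M) = ennreal s"
    if "S \<in> sets M" "G \<subseteq> S" "S \<subseteq> Ge" "emeasure N S = ennreal s" for S
    using that lpos eN[OF that(1)] by (intro exI[of _ l] exI[of _ S]) (auto simp: G_def Ge_def not_less)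
  show ?thesis
  proof (cases "emeasure N G = ennreal s")
    case True then show ?thesis using good[of G] Gm GGe by auto
  next
    case F1: False
    show ?thesis
    proof (cases "emeasure N Ge = ennreal s")
      case True then show ?thesis using good[of Ge] Gm GGe by auto
    next
      case F2: False
      have lt1: "emeasure N G < ennreal s" using F1 nG by simp
      have lt2: "ennreal s < emeasure N Ge" using F2 nGe by simp
      define S2 where "S2 r = G \<union> {y \<in> Ge. r < g y}" for r :: real
      have S2m: "S2 r \<in> sets N" for r unfolding S2_def sN using Gm by measurable
      have S2mono: "S2 q \<subseteq> S2 p" if "p \<le> q" for p q
        using that by (auto simp: S2_def)
      have "(\<Union>m::nat. S2 (- real m)) = Ge"
      proof -
        have "\<exists>m::nat. - real m < x" for x :: real
          using reals_Archimedean2[of "- x"] by (metis minus_less_iff)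
        then show ?thesis using GGe unfolding S2_def by auto
      qed
      then have "(SUP m::nat. emeasure N (S2 (- real m))) = emeasure N Ge"
        using S2m by (subst SUP_emeasure_incseq) (auto intro!: monoI S2mono)
      then have "ennreal s < (SUP m::nat. emeasure N (S2 (- real m)))" using lt2 by simp
      then obtain ma2 :: nat where ma2: "ennreal s < emeasure N (S2 (- real ma2))"
        by (auto simp: less_SUP_iff)
      have "(\<Inter>m::nat. S2 (real m)) = G"
      proof -
        have "\<not> (\<forall>m::nat. real m < x)" for x :: real
          using reals_Archimedean2[of x] by (meson less_asym)
        then show ?thesis unfolding S2_def by auto
      qed
      moreover have "(INF m::nat. emeasure N (S2 (real m))) = emeasure N (\<Inter>m::nat. S2 (real m))"
        using S2m finN sN by (intro INF_emeasure_decseq) (auto intro!: antimonoI S2mono)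
      ultimately have "(INF m::nat. emeasure N (S2 (real m))) < ennreal s" using lt1 by simp
      then obtain mb2 :: nat where mb2: "emeasure N (S2 (real mb2)) < ennreal s"
        by (auto simp: INF_less_iff)
      have finS2: "emeasure N (S2 p) \<noteq> \<infinity>" for p using finN S2m sN by auto
      obtain r where r: "emeasure N (\<Union>m. S2 (r + 1/Suc m)) \<le> ennreal s"
          "ennreal s \<le> emeasure N (\<Inter>m. S2 (r - 1/Suc m))"
        using sup_split[of S2 N "ennreal s" "- real ma2" "real mb2", OF S2m finS2 S2mono
            less_imp_le[OF ma2] mb2] by blast
      define S where "S = G \<union> {y \<in> Ge. r < g y}"
      have U1: "(\<Union>m. S2 (r + 1/Suc m)) = S"
      proof -
        have "(\<exists>m::nat. r + 1/Suc m < x) \<longleftrightarrow> r < x" for x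
          using ennreal_E1 by (metis (no_types) add.commute less_add_same_cancel2 less_trans
              nat_approx_posE diff_gt_0_iff_gt of_nat_Suc zero_less_divide_1_iff of_nat_0_less_iff zero_less_Suc less_diff_eq)
        then show ?thesis by (auto simp: S2_def S_def)
      qed
      have U2: "(\<Inter>m. S2 (r - 1/Suc m)) \<subseteq> S \<union> {y \<in> space M. g y = r}"
      proof -
        have rle: "r \<le> x" if "\<forall>m::nat. r - 1/Suc m < x" for x
        proof (rule field_le_epsilon)
          fix e :: real assume "e > 0"
          then obtain m :: nat where m: "1 / Suc m < e"
            by (metis nat_approx_posE of_nat_Suc)
          then show "r \<le> x + e" using that[rule_format, of m] by linarith
        qed
        then show ?thesis using Gm(2)[THEN sets.sets_into_space] unfolding S2_def S_def
          by (auto simp del: of_nat_Suc) (metis rle order.not_eq_order_implies_strict)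
      qed
      have Sm: "S \<in> sets M" unfolding S_def using Gm by measurable
      have "emeasure N (\<Inter>m. S2 (r - 1/Suc m)) \<le> emeasure N (S \<union> {y \<in> space M. g y = r})"
        using U2 Sm sN by (intro emeasure_mono) auto
      also have "\<dots> \<le> emeasure N S + emeasure N {y \<in> space M. g y = r}"
        using Sm sN by (intro emeasure_subadditive) auto
      also have "emeasure N {y \<in> space M. g y = r} = 0"
        using gnull by (intro nullN) auto
      finally have "ennreal s \<le> emeasure N S" using r(2) by simp
      moreover have "emeasure N S \<le> ennreal s" using r(1) U1 by simp
      ultimately have "emeasure N S = ennreal s" by simp
      then show ?thesis using good[of S] Sm GGe by (auto simp: S_def)
    qed
  qed
qed

interpretation PSF: product_sigma_finite "\<lambda>_::nat. lborel :: real measure"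
  by standard

definition fib :: "nat set \<Rightarrow> nat \<Rightarrow> (nat\<Rightarrow>real) set \<Rightarrow> (nat\<Rightarrow>real) \<Rightarrow> ennreal" where
  "fib H j B y = emeasure (LM {j}) ((\<lambda>x. merge H {j} (y, x)) -` B \<inter> space (LM {j}))"

lemma merge_meas: "y \<in> space (LM H) \<Longrightarrow> (\<lambda>x. merge H {j} (y, x)) \<in> measurable (LM {j}) (LM (H \<union> {j}))"
  by measurable

lemma F1: "finite H \<Longrightarrow> j \<notin> H \<Longrightarrow> B \<in> sets (LM (H \<union> {j})) \<Longrightarrow>
  emeasure (LM (H \<union> {j})) B = (\<integral>\<^sup>+y. fib H j B y \<partial>LM H)"
  unfolding fib_def by (rule PSF.emeasure_fold_integral) auto

lemma F2: "finite H \<Longrightarrow> j \<notin> H \<Longrightarrow> B \<in> sets (LM (H \<union> {j})) \<Longrightarrow>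
  fib H j B \<in> borel_measurable (LM H)"
  unfolding fib_def[abs_def] by (rule PSF.emeasure_fold_measurable) auto

lemma F3: "B \<subseteq> B' \<Longrightarrow> B' \<in> sets (LM (H \<union> {j})) \<Longrightarrow> y \<in> space (LM H) \<Longrightarrow> fib H j B y \<le> fib H j B' y"
  unfolding fib_def
  by (intro emeasure_mono measurable_sets[OF merge_meas]) auto

lemma restrict_merge: "y \<in> space (LM H) \<Longrightarrow> restrict (merge H {j} (y, x)) H = y"
  by (auto simp: space_PiM merge_def restrict_def PiE_def extensional_def fun_eq_iff)

lemma F4: "y \<in> space (LM H) \<Longrightarrow> fib H j B y \<noteq> 0 \<Longrightarrow> y \<in> (\<lambda>x. restrict x H) ` B"
proof -
  assume y: "y \<in> space (LM H)" and nz: "fib H j B y \<noteq> 0"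
  then have "(\<lambda>x. merge H {j} (y, x)) -` B \<inter> space (LM {j}) \<noteq> {}"
    by (auto simp: fib_def)
  then obtain x where "merge H {j} (y, x) \<in> B" by blast
  then show ?thesis using restrict_merge[OF y] by (metis image_eqI)
qed

lemma F5: "y \<in> space (LM H) \<Longrightarrow>
  fib H j (B \<inter> {x. restrict x H \<in> S'}) y = fib H j B y * indicator S' y"
  using restrict_merge[of y H] by (auto simp: fib_def indicator_def)

lemma preimage_fsigma:
  assumes S: "fsigma_in (PT H) S'" and H: "H \<subseteq> I"
  shows "fsigma_in (PT I) {x \<in> topspace (PT I). restrict x H \<in> S'}"
proof -
  obtain U where U: "countable U" "\<And>c. c \<in> U \<Longrightarrow> closedin (PT H) c" "S' = \<Union>U"
    using S unfolding fsigma_in_def union_of_def by auto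
  have "{x \<in> topspace (PT I). restrict x H \<in> S'} = (\<Union>c\<in>U. {x \<in> topspace (PT I). restrict x H \<in> c})"
    using U(3) by auto
  moreover have "fsigma_in (PT I) (\<Union>c\<in>U. {x \<in> topspace (PT I). restrict x H \<in> c})"
  proof (rule fsigma_in_Union)
    show "countable ((\<lambda>c. {x \<in> topspace (PT I). restrict x H \<in> c}) ` U)" using U(1) by blast
  next
    fix T assume "T \<in> (\<lambda>c. {x \<in> topspace (PT I). restrict x H \<in> c}) ` U"
    then obtain c where c: "c \<in> U" "T = {x \<in> topspace (PT I). restrict x H \<in> c}" by blast
    show "fsigma_in (PT I) T" unfolding c(2)
      by (rule closed_imp_fsigma_in[OF closedin_continuous_map_preimage[OF cont_restrict[OF H] U(2)[OF c(1)]]])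
  qed
  ultimately show ?thesis by simp
qed

lemma proj_fsigma:
  assumes A: "fsigma_in (PT I) A" and H: "H \<subseteq> I" and fin: "finite I"
  shows "fsigma_in (PT H) ((\<lambda>x. restrict x H) ` A)"
proof -
  obtain U where U: "countable U" "\<And>c. c \<in> U \<Longrightarrow> closedin (PT I) c" "A = \<Union>U"
    using A unfolding fsigma_in_def union_of_def by auto
  have "(\<lambda>x. restrict x H) ` A = (\<Union>c\<in>U. (\<lambda>x. restrict x H) ` c)"
    using U(3) by auto
  moreover have "fsigma_in (PT H) (\<Union>c\<in>U. (\<lambda>x. restrict x H) ` c)"
    using U(1,2) by (intro fsigma_in_Union) (auto intro: proj_closed_fsigma[OF _ H fin])
  ultimately show ?thesis by simp
qed

lemma hyper_null:
  assumes k: "k \<in> H" and fin: "finite H"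
  shows "emeasure (LM H) {y \<in> space (LM H). y k = r} = 0"
proof -
  have "{y \<in> space (LM H). y k = r} = PiE H (\<lambda>i. if i = k then {r} else UNIV)"
    using k by (auto simp: space_PiM PiE_def Pi_def split: if_splits)
  moreover have "emeasure (LM H) (PiE H (\<lambda>i. if i = k then {r} else UNIV)) =
      (\<Prod>i\<in>H. emeasure lborel (if i = k then {r} else UNIV))"
    using fin by (intro PSF.emeasure_PiM) auto
  moreover have "(\<Prod>i\<in>H. emeasure lborel (if i = k then {r::real} else UNIV)) = 0"
    using k fin by (intro prod_zero) auto
  ultimately show ?thesis by simp
qed

lemma step:
  fixes n j :: nat and F :: "(nat \<Rightarrow> real) set" and s :: real
  assumes n: "n \<ge> 2" and j: "j \<in> {1..n}" and F: "fsigma_in (PT {1..n}) F"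
    and mF: "emeasure (LM {1..n}) F = ennreal (2 * s)" and s: "s > 0"
  shows "\<exists>G. G \<subseteq> F \<and> fsigma_in (PT {1..n}) G \<and> emeasure (LM {1..n}) G = ennreal s \<and>
     (\<forall>A. fsigma_in (PT {1..n}) A \<and> A \<subseteq> F \<and> ennreal s \<le> emeasure (LM {1..n}) A \<longrightarrow>
        emeasure (completion (LM ({1..n}-{j}))) ((\<lambda>x. restrict x ({1..n}-{j})) ` G)
          \<le> emeasure (completion (LM ({1..n}-{j}))) ((\<lambda>x. restrict x ({1..n}-{j})) ` A))"
proof -
  define H where "H = {1..n} - {j}"
  have finH: "finite H" and jH: "j \<notin> H" and HU: "H \<union> {j} = {1..n}" and Hsub: "H \<subseteq> {1..n}"
    using j by (auto simp: H_def)
  obtain k where k: "k \<in> H"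
  proof (cases "j = 1")
    case True then show ?thesis using n that[of 2] by (auto simp: H_def)
  next
    case False then show ?thesis using n that[of 1] by (auto simp: H_def)
  qed
  have Fm: "F \<in> sets (LM (H \<union> {j}))" using fsigma_sets[OF F] HU by simp
  define f where "f = fib H j F"
  have fm: "f \<in> borel_measurable (LM H)" unfolding f_def by (rule F2[OF finH jH Fm])
  have tot: "(\<integral>\<^sup>+y. f y \<partial>LM H) = ennreal (2 * s)"
    using F1[OF finH jH Fm] mF HU by (simp add: f_def)
  have gm: "(\<lambda>y. y k) \<in> borel_measurable (LM H)" using k by measurable
  obtain l S where lS: "l > 0" "S \<in> sets (LM H)" "\<forall>y\<in>S. ennreal l \<le> f y"
     "\<forall>y\<in>space (LM H). y \<notin> S \<longrightarrow> f y \<le> ennreal l" "(\<integral>\<^sup>+y. f y * indicator S y \<partial>LM H) = ennreal s"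
    using level_set[OF fm gm tot s hyper_null[OF k finH]] by blast
  have finS: "emeasure (LM H) S < \<infinity>"
  proof -
    have "ennreal l * emeasure (LM H) S = (\<integral>\<^sup>+y. ennreal l * indicator S y \<partial>LM H)"
      using lS(2) by (simp add: nn_integral_cmult_indicator)
    also have "\<dots> \<le> (\<integral>\<^sup>+y. f y * indicator S y \<partial>LM H)"
      using lS(3) by (intro nn_integral_mono) (auto simp: indicator_def)
    also have "\<dots> = ennreal s" by (rule lS(5))
    finally have "ennreal l * emeasure (LM H) S \<noteq> \<infinity>" by (auto simp: top_unique)
    then show ?thesis using lS(1) by (auto simp: ennreal_mult_eq_top_iff less_top)
  qed
  obtain S' where S': "fsigma_in (PT H) S'" "S' \<subseteq> S" "S' \<in> sets (LM H)" "emeasure (LM H) (S - S') = 0"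
    using inner_fsigma[OF lS(2) finS] by blast
  define G where "G = F \<inter> {x. restrict x H \<in> S'}"
  have Fsub: "F \<subseteq> topspace (PT {1..n})" using fsigma_in_subset[OF F] .
  have G2: "G = F \<inter> {x \<in> topspace (PT {1..n}). restrict x H \<in> S'}"
    using Fsub by (auto simp: G_def)
  have Gfs: "fsigma_in (PT {1..n}) G"
    unfolding G2 by (intro fsigma_in_Int F preimage_fsigma[OF S'(1) Hsub])
  have Gm: "G \<in> sets (LM (H \<union> {j}))" using fsigma_sets[OF Gfs] HU by simp
  have "emeasure (LM {1..n}) G = (\<integral>\<^sup>+y. fib H j G y \<partial>LM H)"
    using F1[OF finH jH Gm] HU by simp
  also have "\<dots> = (\<integral>\<^sup>+y. f y * indicator S' y \<partial>LM H)"
    unfolding G_def f_def by (intro nn_integral_cong F5)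
  also have "\<dots> = (\<integral>\<^sup>+y. f y * indicator S y \<partial>LM H)"
  proof (rule nn_integral_cong_AE)
    have "S - S' \<in> null_sets (LM H)" using S' lS(2) by (intro null_setsI) auto
    then have "AE y in LM H. y \<notin> S - S'" by (rule AE_not_in)
    then show "AE y in LM H. f y * indicator S' y = f y * indicator S y"
      by eventually_elim (use S'(2) in \<open>auto simp: indicator_def\<close>)
  qed
  also have "\<dots> = ennreal s" by (rule lS(5))
  finally have mG: "emeasure (LM {1..n}) G = ennreal s" .
  have PG: "(\<lambda>x. restrict x H) ` G \<subseteq> S" using S'(2) by (auto simp: G_def)
  have main: "emeasure (completion (LM H)) ((\<lambda>x. restrict x H) ` G)
          \<le> emeasure (completion (LM H)) ((\<lambda>x. restrict x H) ` A)"
    if A: "fsigma_in (PT {1..n}) A" "A \<subseteq> F" "ennreal s \<le> emeasure (LM {1..n}) A" for A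
  proof -
    define PA where "PA = (\<lambda>x. restrict x H) ` A"
    have PAfs: "fsigma_in (PT H) PA" unfolding PA_def by (rule proj_fsigma[OF A(1) Hsub]) simp
    have PAm: "PA \<in> sets (LM H)" using fsigma_sets[OF PAfs] .
    have Am: "A \<in> sets (LM (H \<union> {j}))" using fsigma_sets[OF A(1)] HU by simp
    have "ennreal s \<le> emeasure (LM {1..n}) A" by (rule A(3))
    also have "\<dots> = (\<integral>\<^sup>+y. fib H j A y \<partial>LM H)"
      using F1[OF finH jH Am] HU by simp
    also have "\<dots> \<le> (\<integral>\<^sup>+y. f y * indicator PA y \<partial>LM H)"
    proof (rule nn_integral_mono)
      fix y assume y: "y \<in> space (LM H)"
      show "fib H j A y \<le> f y * indicator PA y"
      proof (cases "y \<in> PA")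
        case True
        then show ?thesis using F3[OF A(2) Fm y] by (simp add: f_def)
      next
        case False
        then have "fib H j A y = 0" using F4[OF y, of j A] by (auto simp: PA_def)
        then show ?thesis by simp
      qed
    qed
    finally have "(\<integral>\<^sup>+y. f y * indicator S y \<partial>LM H) \<le> (\<integral>\<^sup>+y. f y * indicator PA y \<partial>LM H)"
      using lS(5) by simp
    then have SPA: "emeasure (LM H) S \<le> emeasure (LM H) PA"
      using lS by (intro bathtub[OF fm lS(2) PAm lS(1)]) auto
    have "emeasure (completion (LM H)) ((\<lambda>x. restrict x H) ` G) \<le> emeasure (completion (LM H)) S"
      using PG lS(2) by (intro emeasure_mono) auto
    also have "\<dots> = emeasure (LM H) S" using lS(2) by simp
    also have "\<dots> \<le> emeasure (LM H) PA" by (rule SPA)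
    also have "\<dots> = emeasure (completion (LM H)) PA" using PAm by simp
    finally show ?thesis by (simp add: PA_def)
  qed
  show ?thesis
    using Gfs mG main by (intro exI[of _ G]) (auto simp: G_def H_def)
qed

definition Pstep :: "nat \<Rightarrow> nat \<Rightarrow> real \<Rightarrow> (nat\<Rightarrow>real) set \<Rightarrow> (nat\<Rightarrow>real) set \<Rightarrow> bool" where
  "Pstep n j s F G \<longleftrightarrow> G \<subseteq> F \<and> fsigma_in (PT {1..n}) G \<and> emeasure (LM {1..n}) G = ennreal s \<and>
     (\<forall>A. fsigma_in (PT {1..n}) A \<and> A \<subseteq> F \<and> ennreal s \<le> emeasure (LM {1..n}) A \<longrightarrow>
        emeasure (completion (LM ({1..n}-{j}))) ((\<lambda>x. restrict x ({1..n}-{j})) ` G)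
          \<le> emeasure (completion (LM ({1..n}-{j}))) ((\<lambda>x. restrict x ({1..n}-{j})) ` A))"

primrec seqE :: "nat \<Rightarrow> real \<Rightarrow> (nat\<Rightarrow>real) set \<Rightarrow> nat \<Rightarrow> (nat\<Rightarrow>real) set" where
  "seqE n t E 0 = E"
| "seqE n t E (Suc i) = (SOME G. Pstep n (Suc i) (t / 2 ^ Suc i) (seqE n t E i) G)"

lemma seqE_props:
  assumes n: "n \<ge> 2" and E: "fsigma_in (PT {1..n}) E" and t: "t > 0"
    and mE: "emeasure (LM {1..n}) E = ennreal t"
  shows "i \<le> n \<Longrightarrow> fsigma_in (PT {1..n}) (seqE n t E i) \<and> emeasure (LM {1..n}) (seqE n t E i) = ennreal (t / 2 ^ i)
     \<and> (i \<ge> 1 \<longrightarrow> Pstep n i (t / 2 ^ i) (seqE n t E (i - 1)) (seqE n t E i))"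
proof (induction i)
  case 0 then show ?case using E mE by simp
next
  case (Suc i)
  then have IH: "fsigma_in (PT {1..n}) (seqE n t E i)" "emeasure (LM {1..n}) (seqE n t E i) = ennreal (t / 2 ^ i)"
    by auto
  have j: "Suc i \<in> {1..n}" using Suc.prems by auto
  have eq: "t / 2 ^ i = 2 * (t / 2 ^ Suc i)" by simp
  have "\<exists>G. Pstep n (Suc i) (t / 2 ^ Suc i) (seqE n t E i) G"
    unfolding Pstep_def using step[OF n j IH(1) IH(2)[unfolded eq]] t by simp
  then have P: "Pstep n (Suc i) (t / 2 ^ Suc i) (seqE n t E i) (seqE n t E (Suc i))"
    by (simp add: someI_ex)
  then show ?case by (auto simp: Pstep_def)
qed

lemma Rn_eq: "fsigma_in (PT {1..n}) X \<Longrightarrow> emeasure (Rn_meas n) X = emeasure (LM {1..n}) X"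
  unfolding Rn_meas_def using fsigma_sets[of "{1..n}" X] by simp

theorem lemma2p3:
  fixes n :: nat and E :: "(nat \<Rightarrow> real) set" and t :: real
  assumes "n \<ge> 2"
    and "Fsigma_Rn n E"
    and "0 < t"
    and "emeasure (Rn_meas n) E = ennreal t"
  shows "\<exists>Es :: nat \<Rightarrow> (nat \<Rightarrow> real) set.
           Es 0 = E \<and>
           (\<forall>j\<le>n. Fsigma_Rn n (Es j)) \<and>
           (\<forall>j<n. Es (Suc j) \<subseteq> Es j) \<and>
           (\<forall>j\<le>n. emeasure (Rn_meas n) (Es j) = ennreal (t / 2 ^ j)) \<and>
           (\<forall>j\<in>{1..n}. \<forall>A. Fsigma_Rn n A \<and> A \<subseteq> Es (j - 1) \<and>
                 emeasure (Rn_meas n) A \<ge> ennreal (t / 2 ^ j)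
               \<longrightarrow> mes_hyp n j (proj_k n j (Es j)) \<le> mes_hyp n j (proj_k n j A))"
proof -
  have E: "fsigma_in (PT {1..n}) E" using assms(2) by (simp add: Fsigma_Rn_def Rn_top_def)
  have mE: "emeasure (LM {1..n}) E = ennreal t" using assms(4) Rn_eq[OF E] by simp
  note props = seqE_props[OF assms(1) E assms(3) mE]
  define Es where "Es = seqE n t E"
  show ?thesis
  proof (intro exI[of _ Es] conjI allI impI ballI)
    show "Es 0 = E" by (simp add: Es_def)
  next
    fix j assume "j \<le> n"
    then show "Fsigma_Rn n (Es j)" using props[of j] by (simp add: Es_def Fsigma_Rn_def Rn_top_def)
  next
    fix j assume "j < n"
    then show "Es (Suc j) \<subseteq> Es j" using props[of "Suc j"] by (simp add: Es_def Pstep_def)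
  next
    fix j assume "j \<le> n"
    then show "emeasure (Rn_meas n) (Es j) = ennreal (t / 2 ^ j)"
      using props[of j] Rn_eq[of n "Es j"] by (simp add: Es_def)
  next
    fix j A assume j: "j \<in> {1..n}" and A: "Fsigma_Rn n A \<and> A \<subseteq> Es (j - 1) \<and> emeasure (Rn_meas n) A \<ge> ennreal (t / 2 ^ j)"
    have Afs: "fsigma_in (PT {1..n}) A" using A by (simp add: Fsigma_Rn_def Rn_top_def)
    have P: "Pstep n j (t / 2 ^ j) (Es (j - 1)) (Es j)" using props[of j] j by (simp add: Es_def)
    show "mes_hyp n j (proj_k n j (Es j)) \<le> mes_hyp n j (proj_k n j A)"
      using P Afs A Rn_eq[OF Afs] unfolding Pstep_def mes_hyp_def proj_k_def by auto
  qed
qed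

end
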